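(* Let $\mathcal S_1=(C,\phi_1,F)$ and $\mathcal S_2=(C,\phi_2,F)$ be two systems with common component set $C=[n]$, semicoherent structure functions $\phi_1,\phi_2$, and common lifetime distribution $F$ having no ties. Suppose that \[ \Pr\big(\mathbf X(t_1)=\mathbf x\text{ and }\mathbf X(t_2)=\mathbf y\big)=\Pr\big(\mathbf X(t_1)=\sigma(\mathbf x)\text{ and }\mathbf X(t_2)=\sigma(\mathbf y)\big) \] for all $\mathbf x,\mathbf y\in\{0,1\}^n$, all $t_1,t_2\ge0$ and all $\sigma\in\mathfrak S_n$. Then for all $t_1,t_2\ge0$, \[ \overline F_{\mathcal S_1,\mathcal S_2}(t_1,t_2)=\sum_{k=1}^n\sum_{l=1}^n s_{k,l}\,\overline F_{k:n,l:n}(t_1,t_2). \]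
   Context: Let $n\ge1$, $C=[n]$, and let $T_1,\ldots,T_n$ be nonnegative random component lifetimes with joint c.d.f. $F$ having no ties. $\mathfrak S_n$ is the symmetric group on $[n]$, and for $\mathbf x\in\{0,1\}^n$, $\sigma(\mathbf x)=(x_{\sigma^{-1}(1)},\ldots,x_{\sigma^{-1}(n)})$. A structure function $\phi\colon\{0,1\}^n\to\{0,1\}$ is semicoherent if nondecreasing in each variable with $\phi(0,\ldots,0)=0$, $\phi(1,\ldots,1)=1$; Boolean vectors are identified with subsets via $x_i=1\iff i\in A$. For $t\ge0$, $X_j(t)=\mathrm{Ind}(T_j>t)$, $\mathbf X(t)=(X_1(t),\ldots,X_n(t))$; the lifetime $T_{\mathcal S}$ of $\mathcal S=(C,\phi,F)$ is the random time with $\phi(\mathbf X(t))=1$ iff $t<T_{\mathcal S}$. $T_{k:n}$ is the $k$-th smallest lifetime. $\overline F_{\mathcal S_1,\mathcal S_2}(t_1,t_2)=\Pr(T_{\mathcal S_1}>t_1\text{ and }T_{\mathcal S_2}>t_2)$ and $\overline F_{k:n,l:n}(t_1,t_2)=\Pr(T_{k:n}>t_1\text{ and }T_{l:n}>t_2)$. The combinatorial joint structure signature $s_{k,l}$ ($k,l\in[n]$) is defined (independently of $F$) by $s_{k,l}=\overline S_{k-1,l-1}-\overline S_{k,l-1}-\overline S_{k-1,l}+\overline S_{k,l}$, where for $k,l\in\{0,\ldots,n\}$, \[ \overline S_{k,l}=\sum_{A\subseteq C,\ |A|=n-k}\ \sum_{B\subseteq C,\ |B|=n-l}q_0(A,B)\,\phi_1(A)\,\phi_2(B),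 \] and \[ q_0(A,B)=\begin{cases}\frac{(n-|A|)!\,(|A|-|B|)!\,|B|!}{n!} & \text{if } B\subseteq A,\\[2pt] \frac{(n-|B|)!\,(|B|-|A|)!\,|A|!}{n!} & \text{if } A\subseteq B,\\[2pt] 0 & \text{otherwise.}\end{cases} \] *)

theory Defs
  imports "HOL-Probability.Probability" "HOL-Combinatorics.Permutations"
begin

text \<open>Components are C = {1..n}; Boolean vectors are identified with subsets of C.
  A structure function is a predicate on subsets (true = value 1).\<close>

definition semicoherent :: "nat \<Rightarrow> (nat set \<Rightarrow> bool) \<Rightarrow> bool" where
  "semicoherent n \<phi> \<longleftrightarrow>
     (\<forall>A B. A \<subseteq> B \<and> B \<subseteq> {1..n} \<and> \<phi> A \<longrightarrow> \<phi> B) \<and> \<not> \<phi> {} \<and> \<phi> {1..n}"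

definition alive :: "nat \<Rightarrow> (nat \<Rightarrow> 'a \<Rightarrow> real) \<Rightarrow> real \<Rightarrow> 'a \<Rightarrow> nat set" where
  "alive n T t \<omega> = {j \<in> {1..n}. T j \<omega> > t}"

text \<open>System lifetime: the time s with phi(X(t)) = 1 iff t < s.\<close>
definition sys_lifetime :: "nat \<Rightarrow> (nat set \<Rightarrow> bool) \<Rightarrow> (nat \<Rightarrow> 'a \<Rightarrow> real) \<Rightarrow> 'a \<Rightarrow> real" where
  "sys_lifetime n \<phi> T \<omega> = Sup {t. \<phi> (alive n T t \<omega>)}"

definition order_stat :: "nat \<Rightarrow> nat \<Rightarrow> (nat \<Rightarrow> 'a \<Rightarrow> real) \<Rightarrow> 'a \<Rightarrow> real" where
  "order_stat n k T \<omega> = sort (map (\<lambda>j. T j \<omega>) [1..<n+1]) ! (k - 1)"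

definition q0 :: "nat \<Rightarrow> nat set \<Rightarrow> nat set \<Rightarrow> real" where
  "q0 n A B =
     (if B \<subseteq> A then fact (n - card A) * fact (card A - card B) * fact (card B) / fact n
      else if A \<subseteq> B then fact (n - card B) * fact (card B - card A) * fact (card A) / fact n
      else 0)"

definition Sbar :: "nat \<Rightarrow> (nat set \<Rightarrow> bool) \<Rightarrow> (nat set \<Rightarrow> bool) \<Rightarrow> nat \<Rightarrow> nat \<Rightarrow> real" where
  "Sbar n \<phi>1 \<phi>2 k l =
     (\<Sum>A\<in>{A. A \<subseteq> {1..n} \<and> card A = n - k}. \<Sum>B\<in>{B. B \<subseteq> {1..n} \<and> card B = n - l}.
        q0 n A B * of_bool (\<phi>1 A) * of_bool (\<phi>2 B))"

definition joint_sig :: "nat \<Rightarrow> (nat set \<Rightarrow> bool) \<Rightarrow> (nat set \<Rightarrow> bool) \<Rightarrow> nat \<Rightarrow> nat \<Rightarrow> real" where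
  "joint_sig n \<phi>1 \<phi>2 k l =
     Sbar n \<phi>1 \<phi>2 (k - 1) (l - 1) - Sbar n \<phi>1 \<phi>2 k (l - 1)
     - Sbar n \<phi>1 \<phi>2 (k - 1) l + Sbar n \<phi>1 \<phi>2 k l"

end

theory Submission
  imports Defs
begin


lemma perm_exists:
  assumes fin: "finite S" and BA: "B \<subseteq> A" and AS: "A \<subseteq> S" and BA': "B' \<subseteq> A'" and AS': "A' \<subseteq> S"
    and cA: "card A = card A'" and cB: "card B = card B'"
  shows "\<exists>\<sigma>. \<sigma> permutes S \<and> \<sigma> ` A = A' \<and> \<sigma> ` B = B'"
proof -
  have fA: "finite A" by (rule finite_subset[OF AS fin])
  have fA': "finite A'" by (rule finite_subset[OF AS' fin])
  have fB: "finite B" by (rule finite_subset[OF BA fA])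
  have fB': "finite B'" by (rule finite_subset[OF BA' fA'])
  obtain f where f: "bij_betw f B B'" using finite_same_card_bij[OF fB fB' cB] by blast
  have c2: "card (A - B) = card (A' - B')" using cA cB BA BA' fB fB' by (simp add: card_Diff_subset)
  have f2: "finite (A - B)" "finite (A' - B')" using fA fA' by simp_all
  obtain g where g: "bij_betw g (A - B) (A' - B')"
    using finite_same_card_bij[OF f2 c2] by blast
  have c3: "card (S - A) = card (S - A')" using cA AS AS' fA fA' by (simp add: card_Diff_subset)
  have f3: "finite (S - A)" "finite (S - A')" using fin by simp_all
  obtain h where h: "bij_betw h (S - A) (S - A')"
    using finite_same_card_bij[OF f3 c3] by blast
  define \<sigma> where "\<sigma> x = (if x \<in> B then f x else if x \<in> A then g x else if x \<in> S then h x else x)" for x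
  have b1: "bij_betw \<sigma> B B'" using f by (rule bij_betw_cong[THEN iffD1, rotated]) (simp add: \<sigma>_def)
  have b2: "bij_betw \<sigma> (A - B) (A' - B')" using g by (rule bij_betw_cong[THEN iffD1, rotated]) (simp add: \<sigma>_def)
  have b3eq: "\<sigma> x = h x" if "x \<in> S - A" for x
  proof -
    have "x \<notin> B" "x \<notin> A" "x \<in> S" using that BA by auto
    then show ?thesis by (simp add: \<sigma>_def)
  qed
  have b3: "bij_betw \<sigma> (S - A) (S - A')" by (subst bij_betw_cong[OF b3eq]) (assumption, rule h)
  have c12: "bij_betw \<sigma> (B \<union> (A - B)) (B' \<union> (A' - B'))" by (rule bij_betw_combine[OF b1 b2]) blast
  have eA: "B \<union> (A - B) = A" "B' \<union> (A' - B') = A'" using BA BA' by auto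
  have b12: "bij_betw \<sigma> A A'" using c12 unfolding eA .
  have b123: "bij_betw \<sigma> (A \<union> (S - A)) (A' \<union> (S - A'))" by (rule bij_betw_combine[OF b12 b3]) blast
  have eS: "A \<union> (S - A) = S" "A' \<union> (S - A') = S" using AS AS' by auto
  have bS: "bij_betw \<sigma> S S" using b123 unfolding eS .
  have "\<sigma> permutes S"
  proof (rule bij_imp_permutes[OF bS])
    fix x assume "x \<notin> S"
    then have "x \<notin> B" "x \<notin> A" using BA AS by auto
    then show "\<sigma> x = x" using \<open>x \<notin> S\<close> by (simp add: \<sigma>_def)
  qed
  moreover have "\<sigma> ` A = A'" using b12 by (rule bij_betw_imp_surj_on)
  moreover have "\<sigma> ` B = B'" using b1 by (rule bij_betw_imp_surj_on)
  ultimately show ?thesis by blast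
qed

lemma q0_sym: "q0 n A B = q0 n B A"
  unfolding q0_def by auto

lemma q0_inv:
  assumes "b \<le> a" "a \<le> n"
  shows "fact (n - a) * fact (a - b) * fact b / fact n * (real (n choose a) * real (a choose b)) = 1"
  using assms by (simp add: binomial_fact field_simps)


lemma count_sub:
  assumes "A' \<subseteq> {1..(n::nat)}"
  shows "card {B'. B' \<subseteq> {1..n} \<and> card B' = b \<and> B' \<subseteq> A'} = card A' choose b"
proof -
  have "{B'. B' \<subseteq> {1..n} \<and> card B' = b \<and> B' \<subseteq> A'} = {B'. B' \<subseteq> A' \<and> card B' = b}" using assms by auto
  moreover have "finite A'" using assms finite_subset by blast
  ultimately show ?thesis by (simp add: n_subsets)
qed



lemma orbit:
  fixes p :: "nat set \<Rightarrow> nat set \<Rightarrow> real"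
  assumes supp: "\<And>A B. A \<subseteq> {1..n} \<Longrightarrow> B \<subseteq> {1..n} \<Longrightarrow> \<not> B \<subseteq> A \<Longrightarrow> p A B = 0"
    and inv: "\<And>A B \<sigma>. A \<subseteq> {1..n} \<Longrightarrow> B \<subseteq> {1..n} \<Longrightarrow> \<sigma> permutes {1..n} \<Longrightarrow> p A B = p (\<sigma>`A) (\<sigma>`B)"
    and A: "A \<subseteq> {1..n}" and B: "B \<subseteq> {1..n}"
  shows "p A B = q0 n A B * (\<Sum>A'\<in>{A'. A' \<subseteq> {1..n} \<and> card A' = card A}.
                  \<Sum>B'\<in>{B'. B' \<subseteq> {1..n} \<and> card B' = card B}. p A' B')"
proof (cases "B \<subseteq> A")
  case False
  then have p0: "p A B = 0" using supp A B by blast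
  show ?thesis
  proof (cases "A \<subseteq> B")
    case True
    have fB: "finite B" using B finite_subset[of B "{1..n}"] by simp
    have lt: "card A < card B" using psubset_card_mono[OF fB, of A] False True by blast
    have "(\<Sum>A'\<in>{A'. A' \<subseteq> {1..n} \<and> card A' = card A}.
                  \<Sum>B'\<in>{B'. B' \<subseteq> {1..n} \<and> card B' = card B}. p A' B') = 0"
    proof (intro sum.neutral ballI)
      fix A' B' assume a: "A' \<in> {A'. A' \<subseteq> {1..n} \<and> card A' = card A}" and b: "B' \<in> {B'. B' \<subseteq> {1..n} \<and> card B' = card B}"
      have fa: "finite A'" using a finite_subset[of A' "{1..n}"] by simp
      have "\<not> B' \<subseteq> A'" using card_mono[OF fa, of B'] a b lt by auto
      then show "p A' B' = 0" using supp a b by blast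
    qed
    then show ?thesis using p0 by simp
  next
    case False2: False
    then show ?thesis using False p0 by (simp add: q0_def)
  qed
next
  case True
  define a where "a = card A"
  define b where "b = card B"
  have fA: "finite A" using A finite_subset[of A "{1..n}"] by simp
  have ba: "b \<le> a" unfolding a_def b_def by (rule card_mono[OF fA True])
  have an: "a \<le> n" unfolding a_def using A card_mono[of "{1..n}" A] by simp
  have each: "p A' B' = (if B' \<subseteq> A' then p A B else 0)"
    if a': "A' \<subseteq> {1..n}" "card A' = a" and b': "B' \<subseteq> {1..n}" "card B' = b" for A' B'
  proof (cases "B' \<subseteq> A'")
    case True
    obtain \<sigma> where s: "\<sigma> permutes {1..n}" "\<sigma> ` A = A'" "\<sigma> ` B = B'"
      using perm_exists[of "{1..n}" B A B' A'] \<open>B \<subseteq> A\<close> A True a' b' a_def b_def by auto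
    show ?thesis using inv[OF A B s(1)] s True by simp
  next
    case False
    then show ?thesis using supp a' b' by simp
  qed
  have "(\<Sum>A'\<in>{A'. A' \<subseteq> {1..n} \<and> card A' = a}. \<Sum>B'\<in>{B'. B' \<subseteq> {1..n} \<and> card B' = b}. p A' B')
      = (\<Sum>A'\<in>{A'. A' \<subseteq> {1..n} \<and> card A' = a}. \<Sum>B'\<in>{B'. B' \<subseteq> {1..n} \<and> card B' = b}.
            if B' \<subseteq> A' then p A B else 0)"
    by (intro sum.cong refl) (simp add: each)
  also have "\<dots> = (\<Sum>A'\<in>{A'. A' \<subseteq> {1..n} \<and> card A' = a}. p A B * real (a choose b))"
  proof (intro sum.cong refl)
    fix A' assume a': "A' \<in> {A'. A' \<subseteq> {1..n} \<and> card A' = a}"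
    have fin: "finite {B'. B' \<subseteq> {1..n} \<and> card B' = b}" by simp
    have "(\<Sum>B'\<in>{B'. B' \<subseteq> {1..n} \<and> card B' = b}. if B' \<subseteq> A' then p A B else 0)
        = (\<Sum>B'\<in>{B'\<in>{B'. B' \<subseteq> {1..n} \<and> card B' = b}. B' \<subseteq> A'}. p A B)"
      by (rule sum.inter_filter[OF fin, symmetric])
    also have "{B'\<in>{B'. B' \<subseteq> {1..n} \<and> card B' = b}. B' \<subseteq> A'} = {B'. B' \<subseteq> {1..n} \<and> card B' = b \<and> B' \<subseteq> A'}"
      by auto
    finally show "(\<Sum>B'\<in>{B'. B' \<subseteq> {1..n} \<and> card B' = b}. if B' \<subseteq> A' then p A B else 0) = p A B * real (a choose b)"
      using count_sub[of A' n b] a' by simp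
  qed
  also have "\<dots> = p A B * real (a choose b) * real (n choose a)"
    using n_subsets[of "{1..n}" a] by simp
  finally have S: "(\<Sum>A'\<in>{A'. A' \<subseteq> {1..n} \<and> card A' = a}. \<Sum>B'\<in>{B'. B' \<subseteq> {1..n} \<and> card B' = b}. p A' B')
     = p A B * (real (n choose a) * real (a choose b))" by simp
  have q: "q0 n A B = fact (n - a) * fact (a - b) * fact b / fact n"
    using True unfolding q0_def a_def b_def by simp
  have qi: "q0 n A B * (real (n choose a) * real (a choose b)) = 1" unfolding q by (rule q0_inv[OF ba an])
  have "q0 n A B * (p A B * (real (n choose a) * real (a choose b)))
      = p A B * (q0 n A B * (real (n choose a) * real (a choose b)))" by (simp only: mult_ac)
  also have "\<dots> = p A B" using qi by simp
  finally show ?thesis unfolding a_def[symmetric] b_def[symmetric] S by simp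
qed



lemma tele1:
  fixes f :: "nat \<Rightarrow> real"
  shows "a \<le> n \<Longrightarrow> (\<Sum>k=1..n. of_bool (n - k + 1 \<le> a) * (f (k-1) - f k)) = f (n-a) - f n"
proof (induction a)
  case 0
  then show ?case by simp
next
  case (Suc a)
  have e: "of_bool (n - k + 1 \<le> Suc a) * (f (k-1) - f k)
      = of_bool (n - k + 1 \<le> a) * (f (k-1) - f k) + (if k = n - a then f (k-1) - f k else 0)"
    if "k \<in> {1..n}" for k using that Suc.prems by auto
  have "(\<Sum>k=1..n. of_bool (n - k + 1 \<le> Suc a) * (f (k-1) - f k))
      = (\<Sum>k=1..n. of_bool (n - k + 1 \<le> a) * (f (k-1) - f k) + (if k = n - a then f (k-1) - f k else 0))"
    by (rule sum.cong[OF refl]) (rule e)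
  also have "\<dots> = (\<Sum>k=1..n. of_bool (n - k + 1 \<le> a) * (f (k-1) - f k)) + (\<Sum>k=1..n. if k = n - a then f (k-1) - f k else 0)"
    by (rule sum.distrib)
  also have "(\<Sum>k=1..n. if k = n - a then f (k-1) - f k else 0) = f (n - a - 1) - f (n-a)"
    using Suc.prems by (subst sum.delta) auto
  also have "(\<Sum>k=1..n. of_bool (n - k + 1 \<le> a) * (f (k-1) - f k)) = f (n-a) - f n"
    using Suc.IH Suc.prems by simp
  finally show ?case by simp
qed

lemma tele2:
  fixes S :: "nat \<Rightarrow> nat \<Rightarrow> real"
  assumes "a \<le> n" "b \<le> n" "\<And>l. S n l = 0" "\<And>k. S k n = 0"
  shows "(\<Sum>k=1..n. \<Sum>l=1..n. (S (k-1) (l-1) - S k (l-1) - S (k-1) l + S k l)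
             * (of_bool (n-k+1 \<le> a) * of_bool (n-l+1 \<le> b))) = S (n-a) (n-b)"
proof -
  have inner: "(\<Sum>l=1..n. (S (k-1) (l-1) - S k (l-1) - S (k-1) l + S k l)
             * (of_bool (n-k+1 \<le> a) * of_bool (n-l+1 \<le> b)))
     = of_bool (n-k+1 \<le> a) * ((S (k-1) (n-b) - S (k-1) n) - (S k (n-b) - S k n))" for k
  proof -
    have "(\<Sum>l=1..n. (S (k-1) (l-1) - S k (l-1) - S (k-1) l + S k l)
             * (of_bool (n-k+1 \<le> a) * of_bool (n-l+1 \<le> b)))
       = of_bool (n-k+1 \<le> a) * (\<Sum>l=1..n. of_bool (n-l+1 \<le> b) *
            ((\<lambda>l. S (k-1) l - S k l) (l-1) - (\<lambda>l. S (k-1) l - S k l) l))"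
      by (simp add: sum_distrib_left algebra_simps)
    also have "\<dots> = of_bool (n-k+1 \<le> a) * ((S (k-1) (n-b) - S k (n-b)) - (S (k-1) n - S k n))"
      using tele1[OF assms(2), of "\<lambda>l. S (k-1) l - S k l"] by simp
    finally show ?thesis by (simp add: algebra_simps)
  qed
  have "(\<Sum>k=1..n. \<Sum>l=1..n. (S (k-1) (l-1) - S k (l-1) - S (k-1) l + S k l)
             * (of_bool (n-k+1 \<le> a) * of_bool (n-l+1 \<le> b)))
      = (\<Sum>k=1..n. of_bool (n-k+1 \<le> a) * ((\<lambda>k. S k (n-b) - S k n) (k-1) - (\<lambda>k. S k (n-b) - S k n) k))"
    unfolding inner by simp
  also have "\<dots> = S (n-a) (n-b)"
    using tele1[OF assms(1), of "\<lambda>k. S k (n-b) - S k n"] assms(3,4) by simp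
  finally show ?thesis .
qed

lemma final_identity:
  fixes S :: "nat \<Rightarrow> nat \<Rightarrow> real" and \<pi> :: "nat \<Rightarrow> nat \<Rightarrow> real"
  assumes "\<And>l. S n l = 0" "\<And>k. S k n = 0"
  shows "(\<Sum>a=0..n. \<Sum>b=0..n. \<pi> a b * S (n-a) (n-b))
    = (\<Sum>k=1..n. \<Sum>l=1..n. (S (k-1) (l-1) - S k (l-1) - S (k-1) l + S k l) *
         (\<Sum>a=0..n. \<Sum>b=0..n. (of_bool (n-k+1 \<le> a) * of_bool (n-l+1 \<le> b)) * \<pi> a b))"
proof -
  have "(\<Sum>k=1..n. \<Sum>l=1..n. (S (k-1) (l-1) - S k (l-1) - S (k-1) l + S k l) *
         (\<Sum>a=0..n. \<Sum>b=0..n. (of_bool (n-k+1 \<le> a) * of_bool (n-l+1 \<le> b)) * \<pi> a b))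
     = (\<Sum>k=1..n. \<Sum>l=1..n. \<Sum>a=0..n. \<Sum>b=0..n. \<pi> a b * ((S (k-1) (l-1) - S k (l-1) - S (k-1) l + S k l) *
         (of_bool (n-k+1 \<le> a) * of_bool (n-l+1 \<le> b))))"
    by (simp only: sum_distrib_left mult.assoc mult.commute mult.left_commute)
  also have "\<dots> = (\<Sum>a=0..n. \<Sum>b=0..n. \<Sum>k=1..n. \<Sum>l=1..n. \<pi> a b * ((S (k-1) (l-1) - S k (l-1) - S (k-1) l + S k l) *
         (of_bool (n-k+1 \<le> a) * of_bool (n-l+1 \<le> b))))"
    by (simp only: sum.swap[of _ "{1..n}" "{0..n}"])
  also have "\<dots> = (\<Sum>a=0..n. \<Sum>b=0..n. \<pi> a b * S (n-a) (n-b))"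
  proof (intro sum.cong refl)
    fix a b assume ab: "a \<in> {0..n}" "b \<in> {0..n}"
    have "(\<Sum>k=1..n. \<Sum>l=1..n. \<pi> a b * ((S (k-1) (l-1) - S k (l-1) - S (k-1) l + S k l) *
         (of_bool (n-k+1 \<le> a) * of_bool (n-l+1 \<le> b))))
      = \<pi> a b * (\<Sum>k=1..n. \<Sum>l=1..n. (S (k-1) (l-1) - S k (l-1) - S (k-1) l + S k l) *
         (of_bool (n-k+1 \<le> a) * of_bool (n-l+1 \<le> b)))"
      by (simp only: sum_distrib_left)
    also have "\<dots> = \<pi> a b * S (n-a) (n-b)"
      using tele2[of a n b S] ab assms by simp
    finally show "(\<Sum>k=1..n. \<Sum>l=1..n. \<pi> a b * ((S (k-1) (l-1) - S k (l-1) - S (k-1) l + S k l) *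
         (of_bool (n-k+1 \<le> a) * of_bool (n-l+1 \<le> b)))) = \<pi> a b * S (n-a) (n-b)" .
  qed
  finally show ?thesis by simp
qed

lemma regroup1:
  fixes h :: "nat set \<Rightarrow> real"
  shows "(\<Sum>A\<in>Pow {1..n}. h A) = (\<Sum>a=0..n. \<Sum>A\<in>{A. A \<subseteq> {1..n} \<and> card A = a}. h A)"
proof -
  have sub: "card ` Pow {1..n} \<subseteq> {0..n}"
  proof
    fix x assume "x \<in> card ` Pow {1..n}"
    then obtain A where "A \<subseteq> {1..n}" "x = card A" by auto
    then show "x \<in> {0..n}" using card_mono[of "{1..n}" A] by simp
  qed
  have "(\<Sum>A\<in>Pow {1..n}. h A) = (\<Sum>a=0..n. \<Sum>A\<in>{x. x \<in> Pow {1..n} \<and> card x = a}. h A)"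
    using sum.group[OF _ _ sub, of h] by simp
  also have "\<dots> = (\<Sum>a=0..n. \<Sum>A\<in>{A. A \<subseteq> {1..n} \<and> card A = a}. h A)"
    by simp
  finally show ?thesis .
qed

lemma regroup2:
  fixes g :: "nat set \<Rightarrow> nat set \<Rightarrow> real"
  shows "(\<Sum>A\<in>Pow {1..n}. \<Sum>B\<in>Pow {1..n}. g A B) = (\<Sum>a=0..n. \<Sum>b=0..n.
      \<Sum>A\<in>{A. A \<subseteq> {1..n} \<and> card A = a}. \<Sum>B\<in>{B. B \<subseteq> {1..n} \<and> card B = b}. g A B)"
proof -
  have "(\<Sum>A\<in>Pow {1..n}. \<Sum>B\<in>Pow {1..n}. g A B) = (\<Sum>a=0..n. \<Sum>A\<in>{A. A \<subseteq> {1..n} \<and> card A = a}. \<Sum>b=0..n. \<Sum>B\<in>{B. B \<subseteq> {1..n} \<and> card B = b}. g A B)"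
    by (simp only: regroup1[where n=n])
  also have "\<dots> = (\<Sum>a=0..n. \<Sum>b=0..n.
      \<Sum>A\<in>{A. A \<subseteq> {1..n} \<and> card A = a}. \<Sum>B\<in>{B. B \<subseteq> {1..n} \<and> card B = b}. g A B)"
    by (rule sum.cong[OF refl], rule sum.swap)
  finally show ?thesis .
qed



lemma alive_sub: "alive n T t \<omega> \<subseteq> {1..n}"
  unfolding alive_def by auto

lemma alive_mono: "t \<le> s \<Longrightarrow> alive n T s \<omega> \<subseteq> alive n T t \<omega>"
  unfolding alive_def by auto

lemma sys_iff:
  assumes sc: "semicoherent n \<phi>" and nn: "\<And>j. j \<in> {1..n} \<Longrightarrow> T j \<omega> \<ge> 0"
  shows "t < sys_lifetime n \<phi> T \<omega> \<longleftrightarrow> \<phi> (alive n T t \<omega>)"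
proof -
  let ?X = "{s. \<phi> (alive n T s \<omega>)}"
  have mono: "\<phi> A \<Longrightarrow> A \<subseteq> B \<Longrightarrow> B \<subseteq> {1..n} \<Longrightarrow> \<phi> B" for A B
    using sc unfolding semicoherent_def by blast
  have e: "\<not> \<phi> {}" and f: "\<phi> {1..n}" using sc unfolding semicoherent_def by auto
  have "alive n T (-1) \<omega> = {1..n}" unfolding alive_def using nn by force
  then have ne: "?X \<noteq> {}" using f by (metis (mono_tags, lifting) empty_iff mem_Collect_eq)
  define u where "u = Max (insert 0 ((\<lambda>j. T j \<omega>) ` {1..n}))"
  have bdd: "bdd_above ?X"
  proof (rule bdd_aboveI)
    fix s assume "s \<in> ?X"
    then have "alive n T s \<omega> \<noteq> {}" using e by auto
    then obtain j where j: "j \<in> {1..n}" "s < T j \<omega>" unfolding alive_def by auto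
    have "T j \<omega> \<le> u" unfolding u_def using j(1) by (intro Max_ge) auto
    then show "s \<le> u" using j by simp
  qed
  show ?thesis
  proof
    assume "t < sys_lifetime n \<phi> T \<omega>"
    then obtain s where s: "s \<in> ?X" "t < s" unfolding sys_lifetime_def using less_cSup_iff[OF ne bdd] by blast
    have sub: "alive n T s \<omega> \<subseteq> alive n T t \<omega>" using alive_mono[of t s] s(2) by simp
    have "\<phi> (alive n T s \<omega>)" using s(1) by simp
    then show "\<phi> (alive n T t \<omega>)" by (rule mono[OF _ sub alive_sub])
  next
    assume ph: "\<phi> (alive n T t \<omega>)"
    have ne2: "alive n T t \<omega> \<noteq> {}"
    proof
      assume "alive n T t \<omega> = {}"
      then show False using ph e by simp
    qed
    have fin: "finite (alive n T t \<omega>)" using finite_subset[OF alive_sub] by simp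
    define m where "m = Min ((\<lambda>j. T j \<omega>) ` alive n T t \<omega>)"
    have mt: "t < m" unfolding m_def using fin ne2 by (subst Min_gr_iff) (auto simp: alive_def)
    define s where "s = (t + m) / 2"
    have "alive n T s \<omega> = alive n T t \<omega>"
    proof
      show "alive n T s \<omega> \<subseteq> alive n T t \<omega>" by (rule alive_mono) (use mt in \<open>simp add: s_def\<close>)
      show "alive n T t \<omega> \<subseteq> alive n T s \<omega>"
      proof
        fix j assume j: "j \<in> alive n T t \<omega>"
        have "m \<le> T j \<omega>" unfolding m_def using fin j by (intro Min_le) auto
        then show "j \<in> alive n T s \<omega>" using j mt unfolding s_def alive_def by auto
      qed
    qed
    then have "s \<in> ?X" using ph by simp
    then have "s \<le> sys_lifetime n \<phi> T \<omega>" unfolding sys_lifetime_def using bdd by (rule cSup_upper)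
    then show "t < sys_lifetime n \<phi> T \<omega>" using mt s_def by simp
  qed
qed

lemma sorted_gt_count:
  fixes ys :: "real list"
  assumes "sorted ys" "1 \<le> k" "k \<le> length ys"
  shows "t < ys ! (k-1) \<longleftrightarrow> length ys - k + 1 \<le> length (filter (\<lambda>x. t < x) ys)"
proof -
  let ?I = "{i. i < length ys \<and> t < ys ! i}"
  have L: "length (filter (\<lambda>x. t < x) ys) = card ?I" by (rule length_filter_conv_card)
  show ?thesis
  proof
    assume a: "t < ys ! (k-1)"
    have "{k-1..<length ys} \<subseteq> ?I"
    proof
      fix i assume "i \<in> {k-1..<length ys}"
      then have "ys ! (k-1) \<le> ys ! i" "i < length ys" using assms sorted_nth_mono by auto
      then show "i \<in> ?I" using a by auto
    qed
    then have "card {k-1..<length ys} \<le> card ?I" by (intro card_mono) auto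
    then show "length ys - k + 1 \<le> length (filter (\<lambda>x. t < x) ys)" using L assms by simp
  next
    assume a: "length ys - k + 1 \<le> length (filter (\<lambda>x. t < x) ys)"
    show "t < ys ! (k-1)"
    proof (rule ccontr)
      assume "\<not> t < ys ! (k-1)"
      then have "?I \<subseteq> {k..<length ys}"
      proof (intro subsetI)
        fix i assume i: "i \<in> ?I" and nt: "\<not> t < ys ! (k-1)"
        have "\<not> i \<le> k - 1"
        proof
          assume "i \<le> k - 1"
          then have "ys ! i \<le> ys ! (k-1)" using assms by (intro sorted_nth_mono) auto
          then show False using i nt by auto
        qed
        then show "i \<in> {k..<length ys}" using i assms by auto
      qed
      then have "card ?I \<le> length ys - k" using card_mono[of "{k..<length ys}" ?I] by simp
      then show False using a L assms by simp
    qed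
  qed
qed

lemma ord_iff:
  assumes "1 \<le> k" "k \<le> n"
  shows "t < order_stat n k T \<omega> \<longleftrightarrow> n - k + 1 \<le> card (alive n T t \<omega>)"
proof -
  define xs where "xs = map (\<lambda>j. T j \<omega>) [1..<n+1]"
  have c1: "card (alive n T t \<omega>) = length (filter (\<lambda>x. t < x) xs)"
  proof -
    have "length (filter (\<lambda>x. t < x) xs) = length (filter (\<lambda>j. t < T j \<omega>) [1..<n+1])"
      unfolding xs_def by (simp add: filter_map comp_def)
    also have "\<dots> = card ({j. t < T j \<omega>} \<inter> set [1..<n+1])" by (rule distinct_length_filter) simp
    also have "{j. t < T j \<omega>} \<inter> set [1..<n+1] = alive n T t \<omega>" unfolding alive_def by auto
    finally show ?thesis by simp
  qed
  have c2: "length (filter (\<lambda>x. t < x) (sort xs)) = length (filter (\<lambda>x. t < x) xs)"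
    by (metis mset_filter mset_sort size_mset)
  have len: "length (sort xs) = n" unfolding xs_def by simp
  have "t < order_stat n k T \<omega> \<longleftrightarrow> t < sort xs ! (k-1)" unfolding order_stat_def xs_def by simp
  also have "\<dots> \<longleftrightarrow> length (sort xs) - k + 1 \<le> length (filter (\<lambda>x. t < x) (sort xs))"
    by (rule sorted_gt_count) (use assms len in auto)
  finally show ?thesis using c1 c2 len by simp
qed

lemma meas_partition:
  assumes P: "prob_space M" and fin: "finite I"
    and ms: "\<And>i. i \<in> I \<Longrightarrow> {\<omega> \<in> space M. g \<omega> = i} \<in> sets M"
    and rng: "\<And>\<omega>. \<omega> \<in> space M \<Longrightarrow> g \<omega> \<in> I"
  shows "measure M {\<omega> \<in> space M. Q (g \<omega>)} = (\<Sum>i\<in>I. of_bool (Q i) * measure M {\<omega> \<in> space M. g \<omega> = i})"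
proof -
  interpret prob_space M by (rule P)
  have "{\<omega> \<in> space M. Q (g \<omega>)} = (\<Union>i\<in>{i\<in>I. Q i}. {\<omega> \<in> space M. g \<omega> = i})"
    using rng by auto
  then have "measure M {\<omega> \<in> space M. Q (g \<omega>)} = (\<Sum>i\<in>{i\<in>I. Q i}. measure M {\<omega> \<in> space M. g \<omega> = i})"
    by (simp only:) (rule finite_measure_finite_Union, use fin ms in \<open>auto simp: disjoint_family_on_def\<close>)
  also have "\<dots> = (\<Sum>i\<in>I. if Q i then measure M {\<omega> \<in> space M. g \<omega> = i} else 0)"
    using fin by (simp add: sum.inter_filter)
  also have "\<dots> = (\<Sum>i\<in>I. of_bool (Q i) * measure M {\<omega> \<in> space M. g \<omega> = i})"
    by (rule sum.cong) auto
  finally show ?thesis .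
qed

lemma alive_meas:
  assumes meas: "\<And>j. j \<in> {1..n} \<Longrightarrow> T j \<in> borel_measurable M"
  shows "{\<omega> \<in> space M. alive n T t \<omega> = A} \<in> sets M"
proof (cases "A \<subseteq> {1..n}")
  case False
  have "\<forall>\<omega>. alive n T t \<omega> \<noteq> A" using False alive_sub by metis
  then have e: "{\<omega> \<in> space M. alive n T t \<omega> = A} = {}" by simp
  show ?thesis unfolding e by simp
next
  case True
  have "{\<omega> \<in> space M. alive n T t \<omega> = A} = {\<omega> \<in> space M. \<forall>j\<in>{1..n}. (t < T j \<omega>) = (j \<in> A)}"
    using True unfolding alive_def by auto
  also have "\<dots> \<in> sets M"
  proof (rule sets.sets_Collect_finite_All)
    fix j assume j: "j \<in> {1..n}"
    have g: "{\<omega> \<in> space M. t < T j \<omega>} \<in> sets M" using meas[OF j] borel_measurable_iff_greater by blast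
    show "{\<omega> \<in> space M. (t < T j \<omega>) = (j \<in> A)} \<in> sets M"
    proof (cases "j \<in> A")
      case True then show ?thesis using g by simp
    next
      case False
      have "{\<omega> \<in> space M. (t < T j \<omega>) = (j \<in> A)} = space M - {\<omega> \<in> space M. t < T j \<omega>}" using False by auto
      then show ?thesis using g by auto
    qed
  qed simp
  finally show ?thesis .
qed



theorem proposition12:
  fixes M :: "'a measure" and n :: nat and T :: "nat \<Rightarrow> 'a \<Rightarrow> real"
    and \<phi>1 \<phi>2 :: "nat set \<Rightarrow> bool"
  assumes "prob_space M"
    and "n \<ge> 1"
    and meas: "\<And>j. j \<in> {1..n} \<Longrightarrow> T j \<in> borel_measurable M"
    and nonneg: "\<And>j \<omega>. j \<in> {1..n} \<Longrightarrow> \<omega> \<in> space M \<Longrightarrow> T j \<omega> \<ge> 0"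
    and no_ties: "\<And>i j. i \<in> {1..n} \<Longrightarrow> j \<in> {1..n} \<Longrightarrow> i \<noteq> j \<Longrightarrow>
                   measure M {\<omega> \<in> space M. T i \<omega> = T j \<omega>} = 0"
    and "semicoherent n \<phi>1" and "semicoherent n \<phi>2"
    and exch: "\<And>A B t1 t2 \<sigma>. A \<subseteq> {1..n} \<Longrightarrow> B \<subseteq> {1..n} \<Longrightarrow> t1 \<ge> 0 \<Longrightarrow> t2 \<ge> 0 \<Longrightarrow>
               \<sigma> permutes {1..n} \<Longrightarrow>
               measure M {\<omega> \<in> space M. alive n T t1 \<omega> = A \<and> alive n T t2 \<omega> = B}
             = measure M {\<omega> \<in> space M. alive n T t1 \<omega> = \<sigma> ` A \<and> alive n T t2 \<omega> = \<sigma> ` B}"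
    and "t1 \<ge> 0" and "t2 \<ge> 0"
  shows "measure M {\<omega> \<in> space M. sys_lifetime n \<phi>1 T \<omega> > t1 \<and> sys_lifetime n \<phi>2 T \<omega> > t2}
       = (\<Sum>k=1..n. \<Sum>l=1..n. joint_sig n \<phi>1 \<phi>2 k l *
            measure M {\<omega> \<in> space M. order_stat n k T \<omega> > t1 \<and> order_stat n l T \<omega> > t2})"
proof -
  note sc1 = \<open>semicoherent n \<phi>1\<close> and sc2 = \<open>semicoherent n \<phi>2\<close>
  define p where "p A B = measure M {\<omega> \<in> space M. alive n T t1 \<omega> = A \<and> alive n T t2 \<omega> = B}" for A B
  define g where "g \<omega> = (alive n T t1 \<omega>, alive n T t2 \<omega>)" for \<omega>
  have gms: "{\<omega> \<in> space M. g \<omega> = i} \<in> sets M" for i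
  proof -
    obtain A B where i: "i = (A, B)" by (cases i)
    have "{\<omega> \<in> space M. g \<omega> = i} = {\<omega> \<in> space M. alive n T t1 \<omega> = A} \<inter> {\<omega> \<in> space M. alive n T t2 \<omega> = B}"
      unfolding g_def i by auto
    then show ?thesis using alive_meas[OF meas] by auto
  qed
  have grng: "g \<omega> \<in> Pow {1..n} \<times> Pow {1..n}" for \<omega> unfolding g_def using alive_sub[of n T t1 \<omega>] alive_sub[of n T t2 \<omega>] by auto
  have gen: "measure M {\<omega> \<in> space M. Q (alive n T t1 \<omega>) (alive n T t2 \<omega>)}
      = (\<Sum>A\<in>Pow {1..n}. \<Sum>B\<in>Pow {1..n}. of_bool (Q A B) * p A B)" for Q
  proof -
    have "measure M {\<omega> \<in> space M. Q (alive n T t1 \<omega>) (alive n T t2 \<omega>)}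
        = measure M {\<omega> \<in> space M. (case_prod Q) (g \<omega>)}" unfolding g_def by simp
    also have "\<dots> = (\<Sum>i\<in>Pow {1..n} \<times> Pow {1..n}. of_bool (case_prod Q i) * measure M {\<omega> \<in> space M. g \<omega> = i})"
      by (rule meas_partition[OF \<open>prob_space M\<close>]) (use gms grng in auto)
    also have "\<dots> = (\<Sum>A\<in>Pow {1..n}. \<Sum>B\<in>Pow {1..n}. of_bool (Q A B) * measure M {\<omega> \<in> space M. g \<omega> = (A, B)})"
      unfolding sum.cartesian_product by (intro sum.cong refl) (auto split: prod.split)
    also have "\<dots> = (\<Sum>A\<in>Pow {1..n}. \<Sum>B\<in>Pow {1..n}. of_bool (Q A B) * p A B)"
      unfolding p_def g_def by simp
    finally show ?thesis .
  qed
  define \<pi> where "\<pi> a b = (\<Sum>A\<in>{A. A \<subseteq> {1..n} \<and> card A = a}. \<Sum>B\<in>{B. B \<subseteq> {1..n} \<and> card B = b}. p A B)" for a b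
  have inv: "p A B = p (\<sigma>`A) (\<sigma>`B)" if "A \<subseteq> {1..n}" "B \<subseteq> {1..n}" "\<sigma> permutes {1..n}" for A B \<sigma>
    unfolding p_def using exch[OF that(1,2) \<open>t1 \<ge> 0\<close> \<open>t2 \<ge> 0\<close> that(3)] .
  have porb: "p A B = q0 n A B * \<pi> (card A) (card B)" if AB: "A \<subseteq> {1..n}" "B \<subseteq> {1..n}" for A B
  proof (cases "t1 \<le> t2")
    case True
    have supp: "p A B = 0" if "\<not> B \<subseteq> A" for A B
    proof -
      have e: "{\<omega> \<in> space M. alive n T t1 \<omega> = A \<and> alive n T t2 \<omega> = B} = {}"
      proof -
        have "\<forall>\<omega>. \<not> (alive n T t1 \<omega> = A \<and> alive n T t2 \<omega> = B)"
          using alive_mono[OF True, of n T] that by metis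
        then show ?thesis by simp
      qed
      show ?thesis unfolding p_def e by simp
    qed
    show ?thesis unfolding \<pi>_def
    proof (rule orbit[where p=p and n=n])
      show "\<And>A B. A \<subseteq> {1..n} \<Longrightarrow> B \<subseteq> {1..n} \<Longrightarrow> \<not> B \<subseteq> A \<Longrightarrow> p A B = 0" using supp by blast
      show "\<And>A B \<sigma>. A \<subseteq> {1..n} \<Longrightarrow> B \<subseteq> {1..n} \<Longrightarrow> \<sigma> permutes {1..n} \<Longrightarrow> p A B = p (\<sigma>`A) (\<sigma>`B)"
        by (rule inv)
    qed (rule AB)+
  next
    case False
    define p' where "p' A B = p B A" for A B
    have supp: "p' A B = 0" if "\<not> B \<subseteq> A" for A B
    proof -
      have e: "{\<omega> \<in> space M. alive n T t1 \<omega> = B \<and> alive n T t2 \<omega> = A} = {}"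
      proof -
        have le: "t2 \<le> t1" using False by simp
        have "\<forall>\<omega>. \<not> (alive n T t1 \<omega> = B \<and> alive n T t2 \<omega> = A)"
          using alive_mono[OF le, of n T] that by metis
        then show ?thesis by simp
      qed
      show ?thesis unfolding p'_def p_def e by simp
    qed
    have inv': "p' A B = p' (\<sigma>`A) (\<sigma>`B)" if "A \<subseteq> {1..n}" "B \<subseteq> {1..n}" "\<sigma> permutes {1..n}" for A B \<sigma>
      unfolding p'_def using inv that by blast
    have "p' B A = q0 n B A * (\<Sum>A'\<in>{A'. A' \<subseteq> {1..n} \<and> card A' = card B}.
                  \<Sum>B'\<in>{B'. B' \<subseteq> {1..n} \<and> card B' = card A}. p' A' B')"
    proof (rule orbit[where p=p' and n=n])
      show "\<And>A B. A \<subseteq> {1..n} \<Longrightarrow> B \<subseteq> {1..n} \<Longrightarrow> \<not> B \<subseteq> A \<Longrightarrow> p' A B = 0" using supp by blast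
      show "\<And>A B \<sigma>. A \<subseteq> {1..n} \<Longrightarrow> B \<subseteq> {1..n} \<Longrightarrow> \<sigma> permutes {1..n} \<Longrightarrow> p' A B = p' (\<sigma>`A) (\<sigma>`B)"
        by (rule inv')
    qed (rule AB)+
    also have "(\<Sum>A'\<in>{A'. A' \<subseteq> {1..n} \<and> card A' = card B}.
                  \<Sum>B'\<in>{B'. B' \<subseteq> {1..n} \<and> card B' = card A}. p' A' B') = \<pi> (card A) (card B)"
      unfolding p'_def \<pi>_def by (rule sum.swap)
    finally show ?thesis unfolding p'_def using q0_sym by metis
  qed
  have card_le: "card A \<le> n" if "A \<subseteq> {1..n}" for A
    using card_mono[OF _ that] by simp
  have "{\<omega> \<in> space M. sys_lifetime n \<phi>1 T \<omega> > t1 \<and> sys_lifetime n \<phi>2 T \<omega> > t2}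
      = {\<omega> \<in> space M. \<phi>1 (alive n T t1 \<omega>) \<and> \<phi>2 (alive n T t2 \<omega>)}"
  proof -
    have si: "(t < sys_lifetime n \<phi> T \<omega>) = \<phi> (alive n T t \<omega>)" if "semicoherent n \<phi>" "\<omega> \<in> space M" for \<phi> t \<omega>
      by (rule sys_iff[OF that(1)]) (rule nonneg[OF _ that(2)])
    show ?thesis using si[OF sc1] si[OF sc2] by auto
  qed
  then have "measure M {\<omega> \<in> space M. sys_lifetime n \<phi>1 T \<omega> > t1 \<and> sys_lifetime n \<phi>2 T \<omega> > t2}
      = (\<Sum>A\<in>Pow {1..n}. \<Sum>B\<in>Pow {1..n}. of_bool (\<phi>1 A \<and> \<phi>2 B) * p A B)"
    using gen[of "\<lambda>A B. \<phi>1 A \<and> \<phi>2 B"] by simp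
  also have "\<dots> = (\<Sum>a=0..n. \<Sum>b=0..n. \<Sum>A\<in>{A. A \<subseteq> {1..n} \<and> card A = a}. \<Sum>B\<in>{B. B \<subseteq> {1..n} \<and> card B = b}.
        of_bool (\<phi>1 A \<and> \<phi>2 B) * p A B)"
    by (rule regroup2)
  also have "\<dots> = (\<Sum>a=0..n. \<Sum>b=0..n. \<pi> a b * Sbar n \<phi>1 \<phi>2 (n-a) (n-b))"
  proof (intro sum.cong refl)
    fix a b assume ab: "a \<in> {0..n}" "b \<in> {0..n}"
    have "(\<Sum>A\<in>{A. A \<subseteq> {1..n} \<and> card A = a}. \<Sum>B\<in>{B. B \<subseteq> {1..n} \<and> card B = b}.
        of_bool (\<phi>1 A \<and> \<phi>2 B) * p A B)
      = (\<Sum>A\<in>{A. A \<subseteq> {1..n} \<and> card A = a}. \<Sum>B\<in>{B. B \<subseteq> {1..n} \<and> card B = b}.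
        \<pi> a b * (q0 n A B * of_bool (\<phi>1 A) * of_bool (\<phi>2 B)))"
      by (intro sum.cong refl) (auto simp: porb)
    also have "\<dots> = \<pi> a b * Sbar n \<phi>1 \<phi>2 (n-a) (n-b)"
    proof -
      have na: "n - (n - a) = a" and nb: "n - (n - b) = b" using ab by auto
      show ?thesis unfolding Sbar_def na nb by (simp only: sum_distrib_left)
    qed
    finally show "(\<Sum>A\<in>{A. A \<subseteq> {1..n} \<and> card A = a}. \<Sum>B\<in>{B. B \<subseteq> {1..n} \<and> card B = b}.
        of_bool (\<phi>1 A \<and> \<phi>2 B) * p A B) = \<pi> a b * Sbar n \<phi>1 \<phi>2 (n-a) (n-b)" .
  qed
  also have "\<dots> = (\<Sum>k=1..n. \<Sum>l=1..n. joint_sig n \<phi>1 \<phi>2 k l *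
         (\<Sum>a=0..n. \<Sum>b=0..n. (of_bool (n-k+1 \<le> a) * of_bool (n-l+1 \<le> b)) * \<pi> a b))"
    unfolding joint_sig_def
  proof (rule final_identity)
    have e1: "\<not> \<phi>1 {}" and e2: "\<not> \<phi>2 {}" using sc1 sc2 unfolding semicoherent_def by auto
    have z: "A = {}" if "A \<subseteq> {1..n}" "card A = 0" for A :: "nat set"
      using that finite_subset[of A "{1..n}"] by simp
    show "Sbar n \<phi>1 \<phi>2 n l = 0" for l
      unfolding Sbar_def
    proof (rule sum.neutral, rule ballI)
      fix A assume "A \<in> {A. A \<subseteq> {1..n} \<and> card A = n - n}"
      then have "A = {}" using z by simp
      then show "(\<Sum>B\<in>{B. B \<subseteq> {1..n} \<and> card B = n - l}. q0 n A B * of_bool (\<phi>1 A) * of_bool (\<phi>2 B)) = 0"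
        using e1 by simp
    qed
    show "Sbar n \<phi>1 \<phi>2 k n = 0" for k
      unfolding Sbar_def
    proof (rule sum.neutral, rule ballI, rule sum.neutral, rule ballI)
      fix A B assume "B \<in> {B. B \<subseteq> {1..n} \<and> card B = n - n}"
      then have "B = {}" using z by simp
      then show "q0 n A B * of_bool (\<phi>1 A) * of_bool (\<phi>2 B) = 0"
        using e2 by simp
    qed
  qed
  also have "\<dots> = (\<Sum>k=1..n. \<Sum>l=1..n. joint_sig n \<phi>1 \<phi>2 k l *
            measure M {\<omega> \<in> space M. order_stat n k T \<omega> > t1 \<and> order_stat n l T \<omega> > t2})"
  proof (intro sum.cong refl arg_cong2[where f="(*)"])
    fix k l assume kl: "k \<in> {1..n}" "l \<in> {1..n}"
    have "{\<omega> \<in> space M. order_stat n k T \<omega> > t1 \<and> order_stat n l T \<omega> > t2}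
      = {\<omega> \<in> space M. n-k+1 \<le> card (alive n T t1 \<omega>) \<and> n-l+1 \<le> card (alive n T t2 \<omega>)}"
      using ord_iff[of k n t1 T] ord_iff[of l n t2 T] kl by auto
    then have "measure M {\<omega> \<in> space M. order_stat n k T \<omega> > t1 \<and> order_stat n l T \<omega> > t2}
       = (\<Sum>A\<in>Pow {1..n}. \<Sum>B\<in>Pow {1..n}. of_bool (n-k+1 \<le> card A \<and> n-l+1 \<le> card B) * p A B)"
      using gen[of "\<lambda>A B. n-k+1 \<le> card A \<and> n-l+1 \<le> card B"] by simp
    also have "\<dots> = (\<Sum>a=0..n. \<Sum>b=0..n. \<Sum>A\<in>{A. A \<subseteq> {1..n} \<and> card A = a}. \<Sum>B\<in>{B. B \<subseteq> {1..n} \<and> card B = b}.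
        of_bool (n-k+1 \<le> card A \<and> n-l+1 \<le> card B) * p A B)"
      by (rule regroup2)
    also have "\<dots> = (\<Sum>a=0..n. \<Sum>b=0..n. (of_bool (n-k+1 \<le> a) * of_bool (n-l+1 \<le> b)) * \<pi> a b)"
    proof (intro sum.cong refl)
      fix a b
      have "(\<Sum>A\<in>{A. A \<subseteq> {1..n} \<and> card A = a}. \<Sum>B\<in>{B. B \<subseteq> {1..n} \<and> card B = b}.
        of_bool (n-k+1 \<le> card A \<and> n-l+1 \<le> card B) * p A B)
        = (\<Sum>A\<in>{A. A \<subseteq> {1..n} \<and> card A = a}. \<Sum>B\<in>{B. B \<subseteq> {1..n} \<and> card B = b}.
        (of_bool (n-k+1 \<le> a) * of_bool (n-l+1 \<le> b)) * p A B)"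
        by (intro sum.cong refl) auto
      also have "\<dots> = (of_bool (n-k+1 \<le> a) * of_bool (n-l+1 \<le> b)) * \<pi> a b"
        unfolding \<pi>_def by (simp only: sum_distrib_left)
      finally show "(\<Sum>A\<in>{A. A \<subseteq> {1..n} \<and> card A = a}. \<Sum>B\<in>{B. B \<subseteq> {1..n} \<and> card B = b}.
        of_bool (n-k+1 \<le> card A \<and> n-l+1 \<le> card B) * p A B)
        = (of_bool (n-k+1 \<le> a) * of_bool (n-l+1 \<le> b)) * \<pi> a b" .
    qed
    finally show "(\<Sum>a=0..n. \<Sum>b=0..n. (of_bool (n-k+1 \<le> a) * of_bool (n-l+1 \<le> b)) * \<pi> a b)
      = measure M {\<omega> \<in> space M. order_stat n k T \<omega> > t1 \<and> order_stat n l T \<omega> > t2}" by simp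
  qed
  finally show ?thesis .
qed


end
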